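(* Let $t$ be a positive integer and let $G$ be a graph containing no copy of $\theta_{3,t}[2]$. Let $x,x',y,y'$ be distinct vertices of $G$ and let $R\subset N(y,y')\setminus\{x,x'\}$. Then the number of ordered pairs $(z,z')\in R^2$ of distinct vertices with $d(x,x',z,z')\ge 6t$ is at most $4t|R|$.
   Context: For vertices $v_1,\dots,v_k$ of a graph, $N(v_1,\dots,v_k)$ denotes their common neighbourhood and $d(v_1,\dots,v_k)=|N(v_1,\dots,v_k)|$. The theta graph $\theta_{3,t}$ is the union of $t$ paths of length $3$ sharing the same two endpoints and pairwise internally vertex-disjoint; $F[2]$ is obtained from a graph $F$ by replacing each vertex by an independent set of size $2$ and each edge by a copy of $K_{2,2}$ between the corresponding sets. *)

theory Defs
  imports Main
begin

definition simple_graph :: "'a set \<Rightarrow> ('a \<Rightarrow> 'a \<Rightarrow> bool) \<Rightarrow> bool" where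
  "simple_graph V E \<longleftrightarrow> finite V \<and> (\<forall>u v. E u v \<longrightarrow> u \<in> V \<and> v \<in> V)
     \<and> (\<forall>u v. E u v \<longrightarrow> E v u) \<and> (\<forall>v. \<not> E v v)"

definition common_nbhd :: "'a set \<Rightarrow> ('a \<Rightarrow> 'a \<Rightarrow> bool) \<Rightarrow> 'a set \<Rightarrow> 'a set" where
  "common_nbhd V E S = {w \<in> V. \<forall>v\<in>S. E v w}"

definition codeg :: "'a set \<Rightarrow> ('a \<Rightarrow> 'a \<Rightarrow> bool) \<Rightarrow> 'a set \<Rightarrow> nat" where
  "codeg V E S = card (common_nbhd V E S)"

definition contains_copy :: "'a set \<Rightarrow> ('a \<Rightarrow> 'a \<Rightarrow> bool) \<Rightarrow> 'b set \<Rightarrow> ('b \<Rightarrow> 'b \<Rightarrow> bool) \<Rightarrow> bool" where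
  "contains_copy V E VH EH \<longleftrightarrow> (\<exists>f. inj_on f VH \<and> f ` VH \<subseteq> V \<and>
      (\<forall>u\<in>VH. \<forall>v\<in>VH. EH u v \<longrightarrow> E (f u) (f v)))"

text \<open>Theta graph theta_{3,t}: endpoints A, B and t internally disjoint paths A - U i - W i - B.\<close>
datatype theta_vertex = ThA | ThB | ThU nat | ThW nat

definition theta_V :: "nat \<Rightarrow> theta_vertex set" where
  "theta_V t = {ThA, ThB} \<union> ThU ` {..<t} \<union> ThW ` {..<t}"

fun theta_E0 :: "theta_vertex \<Rightarrow> theta_vertex \<Rightarrow> bool" where
  "theta_E0 ThA (ThU i) = True"
| "theta_E0 (ThU i) (ThW j) = (i = j)"
| "theta_E0 (ThW i) ThB = True"
| "theta_E0 _ _ = False"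

definition theta_E :: "nat \<Rightarrow> theta_vertex \<Rightarrow> theta_vertex \<Rightarrow> bool" where
  "theta_E t u v \<longleftrightarrow> u \<in> theta_V t \<and> v \<in> theta_V t \<and> (theta_E0 u v \<or> theta_E0 v u)"

text \<open>Blow-up F[2]: each vertex replaced by an independent pair, each edge by K_{2,2}.\<close>
definition blowup2_V :: "'b set \<Rightarrow> ('b \<times> bool) set" where
  "blowup2_V VF = VF \<times> UNIV"

definition blowup2_E :: "('b \<Rightarrow> 'b \<Rightarrow> bool) \<Rightarrow> ('b \<times> bool) \<Rightarrow> ('b \<times> bool) \<Rightarrow> bool" where
  "blowup2_E EF p q \<longleftrightarrow> EF (fst p) (fst q)"

end

theory Submission
  imports Defs
begin

lemma two_elems:
  assumes "card A \<ge> 2"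
  shows "\<exists>a b. a \<in> A \<and> b \<in> A \<and> a \<noteq> b"
proof -
  have fin: "finite A" using assms by (metis card.infinite not_numeral_le_zero)
  have "A \<noteq> {}" using assms by auto
  then obtain a where a: "a \<in> A" by auto
  have "card (A - {a}) \<ge> 1" using assms a fin by (simp add: card_Diff_singleton)
  hence "A - {a} \<noteq> {}" by (metis card.empty not_one_le_zero)
  then obtain b where "b \<in> A - {a}" by auto
  thus ?thesis using a by auto
qed

lemma matching:
  assumes "finite R" "P \<subseteq> R \<times> R" "card P > 4*t*card R" "\<forall>z. (z,z) \<notin> P" "k \<le> t"
  shows "\<exists>W. (\<forall>i<k. (W i False, W i True) \<in> P) \<and> (\<forall>i<k. \<forall>j<k. \<forall>b c. W i b = W j c \<longrightarrow> i = j \<and> b = c)"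
  using assms(5)
proof (induction k)
  case 0
  show ?case by auto
next
  case (Suc k)
  have "k \<le> t" using Suc.prems by simp
  then obtain W where W1: "\<forall>i<k. (W i False, W i True) \<in> P"
    and W2: "\<forall>i<k. \<forall>j<k. \<forall>b c. W i b = W j c \<longrightarrow> i = j \<and> b = c" using Suc.IH by auto
  define S where "S = (\<lambda>(i,b). W i b) ` ({..<k} \<times> (UNIV::bool set))"
  have finS: "finite S" unfolding S_def by auto
  have cS: "card S \<le> 2*k"
  proof -
    have "card S \<le> card ({..<k} \<times> (UNIV::bool set))" unfolding S_def by (rule card_image_le) auto
    also have "\<dots> = 2*k" by (simp add: card_cartesian_product)
    finally show ?thesis .
  qed
  have "\<exists>z z'. (z,z') \<in> P \<and> z \<notin> S \<and> z' \<notin> S"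
  proof (rule ccontr)
    assume "\<not> ?thesis"
    hence "P \<subseteq> (S \<inter> R) \<times> R \<union> R \<times> (S \<inter> R)" using assms(2) by auto
    hence "card P \<le> card ((S \<inter> R) \<times> R \<union> R \<times> (S \<inter> R))" by (intro card_mono) (auto simp: assms(1))
    also have "\<dots> \<le> card ((S \<inter> R) \<times> R) + card (R \<times> (S \<inter> R))" by (rule card_Un_le)
    also have "\<dots> = 2 * card (S \<inter> R) * card R" by (simp add: card_cartesian_product)
    also have "\<dots> \<le> 2 * (2*k) * card R"
    proof -
      have "card (S \<inter> R) \<le> card S" using finS by (intro card_mono) auto
      thus ?thesis using cS by simp
    qed
    also have "\<dots> \<le> 4*t*card R" using Suc.prems by simp
    finally show False using assms(3) by simp
  qed
  then obtain z z' where zz: "(z,z') \<in> P" "z \<notin> S" "z' \<notin> S" by auto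
  have zne: "z \<noteq> z'" using zz(1) assms(4) by auto
  have notS: "\<forall>i<k. \<forall>b. W i b \<noteq> z \<and> W i b \<noteq> z'" using zz unfolding S_def by auto
  define W' where "W' = W(k := (\<lambda>b. if b then z' else z))"
  have "\<forall>i<Suc k. (W' i False, W' i True) \<in> P"
    using W1 zz(1) unfolding W'_def by (auto simp: less_Suc_eq)
  moreover have "\<forall>i<Suc k. \<forall>j<Suc k. \<forall>b c. W' i b = W' j c \<longrightarrow> i = j \<and> b = c"
    using W2 notS zne unfolding W'_def by (auto simp: less_Suc_eq split: if_splits)
  ultimately show ?case by blast
qed

lemma choose_U:
  fixes N :: "nat \<Rightarrow> 'a set"
  assumes "\<forall>i<t. finite (N i) \<and> card (N i) \<ge> card X + 2*t" "finite X" "k \<le> t"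
  shows "\<exists>U::nat \<Rightarrow> bool \<Rightarrow> 'a. (\<forall>i<k. \<forall>b. U i b \<in> N i \<and> U i b \<notin> X) \<and> (\<forall>i<k. \<forall>j<k. \<forall>b c. U i b = U j c \<longrightarrow> i = j \<and> b = c)"
  using assms(3)
proof (induction k)
  case 0
  show ?case by auto
next
  case (Suc k)
  have "k \<le> t" using Suc.prems by simp
  then obtain U where U1: "\<forall>i<k. \<forall>b::bool. U i b \<in> N i \<and> U i b \<notin> X"
    and U2: "\<forall>i<k. \<forall>j<k. \<forall>b c. U i b = U j c \<longrightarrow> i = j \<and> b = c" using Suc.IH by auto
  define S where "S = (\<lambda>(i,b). U i b) ` ({..<k} \<times> (UNIV::bool set))"
  have finS: "finite S" unfolding S_def by auto
  have cS: "card S \<le> 2*k"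
  proof -
    have "card S \<le> card ({..<k} \<times> (UNIV::bool set))" unfolding S_def by (rule card_image_le) auto
    also have "\<dots> = 2*k" by (simp add: card_cartesian_product)
    finally show ?thesis .
  qed
  have cY: "card (X \<union> S) \<le> card X + 2*k" using card_Un_le[of X S] cS by simp
  have kt: "k < t" using Suc.prems by simp
  have "card (N k) - card (X \<union> S) \<le> card (N k - (X \<union> S))"
    using finS assms(2) by (intro diff_card_le_card_Diff) auto
  moreover have "card (N k) \<ge> card X + 2*t" using assms(1) kt by auto
  ultimately have "card (N k - (X \<union> S)) \<ge> 2" using cY kt by linarith
  then obtain a a' where aa: "a \<in> N k - (X \<union> S)" "a' \<in> N k - (X \<union> S)" "a \<noteq> a'"
    using two_elems by blast
  have notS: "\<forall>i<k. \<forall>b. U i b \<noteq> a \<and> U i b \<noteq> a'" using aa unfolding S_def by auto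
  define U' where "U' = U(k := (\<lambda>b. if b then a' else a))"
  have "\<forall>i<Suc k. \<forall>b. U' i b \<in> N i \<and> U' i b \<notin> X"
    using U1 aa unfolding U'_def by (auto simp: less_Suc_eq)
  moreover have "\<forall>i<Suc k. \<forall>j<Suc k. \<forall>b c. U' i b = U' j c \<longrightarrow> i = j \<and> b = c"
    using U2 notS aa(3) unfolding U'_def by (auto simp: less_Suc_eq split: if_splits)
  ultimately show ?case by blast
qed

theorem lemma2p2:
  fixes V :: "'a set" and E :: "'a \<Rightarrow> 'a \<Rightarrow> bool" and t :: nat
    and x x' y y' :: 'a and R :: "'a set"
  assumes "simple_graph V E"
    and "t \<ge> 1"
    and "\<not> contains_copy V E (blowup2_V (theta_V t)) (blowup2_E (theta_E t))"
    and "x \<in> V" "x' \<in> V" "y \<in> V" "y' \<in> V"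
    and "distinct [x, x', y, y']"
    and "R \<subseteq> common_nbhd V E {y, y'} - {x, x'}"
  shows "card {(z, z'). z \<in> R \<and> z' \<in> R \<and> z \<noteq> z' \<and> codeg V E {x, x', z, z'} \<ge> 6 * t}
           \<le> 4 * t * card R"
proof (rule ccontr)
  define P where "P = {(z, z'). z \<in> R \<and> z' \<in> R \<and> z \<noteq> z' \<and> codeg V E {x, x', z, z'} \<ge> 6 * t}"
  assume "\<not> ?thesis"
  hence cP: "card P > 4*t*card R" unfolding P_def by simp
  have sg: "finite V" "\<And>u v. E u v \<Longrightarrow> u \<in> V \<and> v \<in> V" "\<And>u v. E u v \<Longrightarrow> E v u" "\<And>v. \<not> E v v"
    using assms(1) unfolding simple_graph_def by auto
  have RV: "R \<subseteq> V" using assms(9) unfolding common_nbhd_def by auto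
  have finR: "finite R" using RV sg(1) finite_subset by auto
  have Rprop: "\<And>z. z \<in> R \<Longrightarrow> E y z \<and> E y' z \<and> z \<noteq> x \<and> z \<noteq> x'"
    using assms(9) unfolding common_nbhd_def by auto
  obtain W where W1: "\<forall>i<t. (W i False, W i True) \<in> P"
    and W2: "\<forall>i<t. \<forall>j<t. \<forall>b c. W i b = W j c \<longrightarrow> i = j \<and> b = c"
  proof -
    have "P \<subseteq> R \<times> R" "\<forall>z. (z,z) \<notin> P" unfolding P_def by auto
    from matching[OF finR this(1) cP this(2), of t] show ?thesis using that by auto
  qed
  have WR: "\<forall>i<t. \<forall>b. W i b \<in> R"
  proof (intro allI impI)
    fix i b assume "i < t"
    thus "W i b \<in> R" using W1 unfolding P_def by (cases b) auto
  qed
  define X where "X = {y, y'} \<union> (\<lambda>(i,b). W i b) ` ({..<t} \<times> (UNIV::bool set))"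
  have finX: "finite X" unfolding X_def by auto
  have cX: "card X \<le> 2 + 2*t"
  proof -
    have "card ((\<lambda>(i,b). W i b) ` ({..<t} \<times> (UNIV::bool set))) \<le> card ({..<t} \<times> (UNIV::bool set))"
      by (rule card_image_le) auto
    also have "\<dots> = 2*t" by (simp add: card_cartesian_product)
    moreover have "card {y, y'} \<le> 2" by (simp add: card_insert_if)
    ultimately show ?thesis unfolding X_def
      using card_Un_le[of "{y,y'}" "(\<lambda>(i,b). W i b) ` ({..<t} \<times> (UNIV::bool set))"] by linarith
  qed
  define N where "N i = common_nbhd V E {x, x', W i False, W i True}" for i
  have NN: "\<forall>i<t. finite (N i) \<and> card (N i) \<ge> card X + 2*t"
  proof (intro allI impI conjI)
    fix i assume "i < t"
    show "finite (N i)" unfolding N_def common_nbhd_def using sg(1) by auto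
    have "card (N i) \<ge> 6*t" using W1 \<open>i<t\<close> unfolding P_def N_def codeg_def by auto
    thus "card (N i) \<ge> card X + 2*t" using cX assms(2) by linarith
  qed
  obtain U where U1: "\<forall>i<t. \<forall>b::bool. U i b \<in> N i \<and> U i b \<notin> X"
    and U2: "\<forall>i<t. \<forall>j<t. \<forall>b c. U i b = U j c \<longrightarrow> i = j \<and> b = c"
    using choose_U[OF NN finX, of t] by auto
  define f where "f p = (case p of (ThA, b) \<Rightarrow> if b then x' else x | (ThB, b) \<Rightarrow> if b then y' else y
     | (ThU i, b) \<Rightarrow> U i b | (ThW i, b) \<Rightarrow> W i b)" for p
  have Uadj: "\<forall>i<t. \<forall>b. E x (U i b) \<and> E x' (U i b) \<and> E (W i False) (U i b) \<and> E (W i True) (U i b) \<and> U i b \<in> V"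
    using U1 unfolding N_def common_nbhd_def by auto
  have UE: "\<And>i b. i < t \<Longrightarrow> E x (U i b) \<and> E x' (U i b) \<and> E (W i False) (U i b) \<and> E (W i True) (U i b) \<and> U i b \<in> V"
    using Uadj by blast
  have WX: "\<And>j c. j < t \<Longrightarrow> W j c \<in> X" unfolding X_def by force
  have UX: "\<And>i b. i < t \<Longrightarrow> U i b \<notin> X" using U1 by blast
  have UA: "U i b \<noteq> x \<and> U i b \<noteq> x' \<and> U i b \<noteq> y \<and> U i b \<noteq> y'" if "i < t" for i b
  proof -
    have "E x (U i b)" "E x' (U i b)" "U i b \<notin> X" using UE[OF that] UX[OF that] by auto
    moreover have "y \<in> X" "y' \<in> X" unfolding X_def by auto
    ultimately show ?thesis using sg(4) by metis
  qed
  have UW: "\<And>i b j c. i < t \<Longrightarrow> j < t \<Longrightarrow> U i b \<noteq> W j c" using UX WX by metis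
  have WE: "\<And>i b. i < t \<Longrightarrow> W i b \<in> V \<and> E y (W i b) \<and> E y' (W i b)" using WR Rprop RV by blast
  have WA: "W i b \<noteq> x \<and> W i b \<noteq> x' \<and> W i b \<noteq> y \<and> W i b \<noteq> y'" if "i < t" for i b
  proof -
    have "W i b \<in> R" using WR that by blast
    thus ?thesis using Rprop[of "W i b"] sg(4) by metis
  qed
  have UU: "\<And>i b j c. i < t \<Longrightarrow> j < t \<Longrightarrow> U i b = U j c \<Longrightarrow> i = j \<and> b = c" using U2 by blast
  have WW: "\<And>i b j c. i < t \<Longrightarrow> j < t \<Longrightarrow> W i b = W j c \<Longrightarrow> i = j \<and> b = c" using W2 by blast
  have UWE: "E (W i d) (U i b) \<and> E (U i b) (W i d)" if "i < t" for i b d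
  proof -
    have e: "E (W i d) (U i b)" using UE[OF that, of b] by (cases d) simp_all
    show ?thesis using e sg(3)[OF e] by simp
  qed
  have dxy: "x \<noteq> x'" "x \<noteq> y" "x \<noteq> y'" "x' \<noteq> y" "x' \<noteq> y'" "y \<noteq> y'" using assms(8) by auto
  have neqs: "\<And>i b. i < t \<Longrightarrow> U i b \<noteq> x" "\<And>i b. i < t \<Longrightarrow> U i b \<noteq> x'"
    "\<And>i b. i < t \<Longrightarrow> U i b \<noteq> y" "\<And>i b. i < t \<Longrightarrow> U i b \<noteq> y'"
    "\<And>i b. i < t \<Longrightarrow> W i b \<noteq> x" "\<And>i b. i < t \<Longrightarrow> W i b \<noteq> x'"
    "\<And>i b. i < t \<Longrightarrow> W i b \<noteq> y" "\<And>i b. i < t \<Longrightarrow> W i b \<noteq> y'"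
    using UA WA by blast+
  have neqs2: "\<And>i b. i < t \<Longrightarrow> x \<noteq> U i b" "\<And>i b. i < t \<Longrightarrow> x' \<noteq> U i b"
    "\<And>i b. i < t \<Longrightarrow> y \<noteq> U i b" "\<And>i b. i < t \<Longrightarrow> y' \<noteq> U i b"
    "\<And>i b. i < t \<Longrightarrow> x \<noteq> W i b" "\<And>i b. i < t \<Longrightarrow> x' \<noteq> W i b"
    "\<And>i b. i < t \<Longrightarrow> y \<noteq> W i b" "\<And>i b. i < t \<Longrightarrow> y' \<noteq> W i b"
    using UA WA by metis+
  have UW2: "\<And>i b j c. i < t \<Longrightarrow> j < t \<Longrightarrow> W j c \<noteq> U i b" using UW by metis
  have dxy2: "x' \<noteq> x" "y \<noteq> x" "y' \<noteq> x" "y \<noteq> x'" "y' \<noteq> x'" "y' \<noteq> y" using assms(8) by auto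
  have UUi: "\<And>i b j c. i < t \<Longrightarrow> j < t \<Longrightarrow> U i b = U j c \<longleftrightarrow> i = j \<and> b = c" using UU by blast
  have WWi: "\<And>i b j c. i < t \<Longrightarrow> j < t \<Longrightarrow> W i b = W j c \<longleftrightarrow> i = j \<and> b = c" using WW by blast
  have fs: "\<And>b. f (ThA, b) = (if b then x' else x)" "\<And>b. f (ThB, b) = (if b then y' else y)"
    "\<And>i b. f (ThU i, b) = U i b" "\<And>i b. f (ThW i, b) = W i b" unfolding f_def by auto
  have tv: "\<And>i. ThU i \<in> theta_V t \<longleftrightarrow> i < t" "\<And>i. ThW i \<in> theta_V t \<longleftrightarrow> i < t"
    "ThA \<in> theta_V t" "ThB \<in> theta_V t" unfolding theta_V_def by auto
  have "contains_copy V E (blowup2_V (theta_V t)) (blowup2_E (theta_E t))"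
    unfolding contains_copy_def
  proof (intro exI[of _ f] conjI)
    show "inj_on f (blowup2_V (theta_V t))"
    proof (rule inj_onI)
      fix u v assume uv: "u \<in> blowup2_V (theta_V t)" "v \<in> blowup2_V (theta_V t)" "f u = f v"
      obtain a b where u: "u = (a, b)" by fastforce
      obtain c d where v: "v = (c, d)" by fastforce
      have ac: "a \<in> theta_V t" "c \<in> theta_V t" using uv unfolding u v blowup2_V_def by auto
      have fe: "f (a, b) = f (c, d)" using uv(3) unfolding u v .
      show "u = v" unfolding u v using ac fe
        apply (cases a; cases c)
        apply (simp_all only: fs tv)
        apply (simp_all add: dxy dxy2 neqs neqs2 UW UW2 UUi WWi split: if_splits)
        done
    qed
    show "f ` blowup2_V (theta_V t) \<subseteq> V"
    proof
      fix w assume "w \<in> f ` blowup2_V (theta_V t)"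
      then obtain a b where ab: "a \<in> theta_V t" "w = f (a, b)" unfolding blowup2_V_def by auto
      show "w \<in> V" using ab assms(4-7) by (cases a) (auto simp: fs tv dest: UE WE)
    qed
    show "\<forall>u\<in>blowup2_V (theta_V t). \<forall>v\<in>blowup2_V (theta_V t). blowup2_E (theta_E t) u v \<longrightarrow> E (f u) (f v)"
    proof (intro ballI impI)
      fix u v assume uv: "u \<in> blowup2_V (theta_V t)" "v \<in> blowup2_V (theta_V t)" "blowup2_E (theta_E t) u v"
      obtain a b where u: "u = (a, b)" by fastforce
      obtain c d where v: "v = (c, d)" by fastforce
      have "theta_E0 a c \<or> theta_E0 c a" "a \<in> theta_V t" "c \<in> theta_V t"
        using uv unfolding u v blowup2_E_def theta_E_def by auto
      thus "E (f u) (f v)" unfolding u v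
        by (cases a; cases c) (auto simp: fs tv UWE dest: UE WE intro: sg(3))
    qed
  qed
  thus False using assms(3) by simp
qed

end
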